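(* Let $q\ge2$, let $\delta$ be such that the matrix $\mathbf M$ with diagonal entries $1-(q-1)\delta$ and all off-diagonal entries $\delta$ is an ergodic stochastic matrix on $\{1,\dots,q\}$, so that $\lambda_2(\mathbf M)=1-q\delta$. If $b$ is a positive integer with $b\,|\lambda_2(\mathbf M)|\le1$, then the reconstruction problem for $T_b$ and $\mathbf M$ is not solvable.
   Context: Tree process on a rooted tree with root $\rho$: the root label is drawn from an initial distribution, and each non-root vertex $v$ with parent $v'$ receives label $j$ with probability $\mathbf M_{\sigma_{v'},j}$, independently across edges given parent labels. $T_b$ is the infinite rooted tree in which every vertex has exactly $b$ children. $L_n$ is the set of vertices at distance $n$ from $\rho$ and $\sigma_n=(\sigma_v)_{v\in L_n}$. With $\mathbf P_n^\ell$ the conditional law of $\sigma_n$ given $\sigma_\rho=\ell$ and $D_V(P,Q)=\frac12\sum|P-Q|$, the reconstruction problem is solvable if there exist $i,j$ with $\lim_n D_V(\mathbf P_n^i,\mathbf P_n^j)>0$. *)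

theory Defs
  imports "HOL-Analysis.Analysis"
begin

text \<open>Transition matrices on the label set {1..q}, represented as functions.\<close>
type_synonym tmatrix = "nat \<Rightarrow> nat \<Rightarrow> real"

definition potts_matrix :: "nat \<Rightarrow> real \<Rightarrow> tmatrix" where
  "potts_matrix q \<delta> i j = (if i = j then 1 - (real q - 1) * \<delta> else \<delta>)"

definition stochastic :: "nat \<Rightarrow> tmatrix \<Rightarrow> bool" where
  "stochastic q M \<longleftrightarrow> (\<forall>i\<in>{1..q}. \<forall>j\<in>{1..q}. 0 \<le> M i j) \<and>
     (\<forall>i\<in>{1..q}. (\<Sum>j=1..q. M i j) = 1)"

fun mpow :: "nat \<Rightarrow> tmatrix \<Rightarrow> nat \<Rightarrow> tmatrix" where
  "mpow q M 0 i j = (if i = j then 1 else 0)"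
| "mpow q M (Suc k) i j = (\<Sum>l=1..q. mpow q M k i l * M l j)"

text \<open>Ergodic (irreducible and aperiodic) finite chain = stochastic and primitive.\<close>
definition ergodic :: "nat \<Rightarrow> tmatrix \<Rightarrow> bool" where
  "ergodic q M \<longleftrightarrow> stochastic q M \<and>
     (\<exists>k>0. \<forall>i\<in>{1..q}. \<forall>j\<in>{1..q}. 0 < mpow q M k i j)"

text \<open>Vertices of T_b are words over {0..<b}; the root is [], the parent of w is butlast w.\<close>
definition verts :: "nat \<Rightarrow> nat \<Rightarrow> nat list set" where
  "verts b n = {w. length w \<le> n \<and> set w \<subseteq> {..<b}}"

definition level :: "nat \<Rightarrow> nat \<Rightarrow> nat list set" where
  "level b n = {w. length w = n \<and> set w \<subseteq> {..<b}}"

text \<open>Conditional law P_n^l of sigma_n given the root label l: sum over all labelings of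
  the vertices of depth \<le> n with root label l that agree with tau on L_n, of the
  product of the edge transition probabilities.\<close>
definition tree_law :: "nat \<Rightarrow> nat \<Rightarrow> tmatrix \<Rightarrow> nat \<Rightarrow> nat \<Rightarrow> (nat list \<Rightarrow> nat) \<Rightarrow> real" where
  "tree_law b q M n l \<tau> =
     (\<Sum>\<sigma>\<in>{\<sigma> \<in> verts b n \<rightarrow>\<^sub>E {1..q}. \<sigma> [] = l \<and> restrict \<sigma> (level b n) = \<tau>}.
        \<Prod>w\<in>verts b n - {[]}. M (\<sigma> (butlast w)) (\<sigma> w))"

definition configs :: "nat \<Rightarrow> nat \<Rightarrow> nat \<Rightarrow> (nat list \<Rightarrow> nat) set" where
  "configs b q n = level b n \<rightarrow>\<^sub>E {1..q}"

definition dtv :: "nat \<Rightarrow> nat \<Rightarrow> tmatrix \<Rightarrow> nat \<Rightarrow> nat \<Rightarrow> nat \<Rightarrow> real" where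
  "dtv b q M n i j = 1/2 * (\<Sum>\<tau>\<in>configs b q n. \<bar>tree_law b q M n i \<tau> - tree_law b q M n j \<tau>\<bar>)"

definition reconstruction_solvable :: "nat \<Rightarrow> nat \<Rightarrow> tmatrix \<Rightarrow> bool" where
  "reconstruction_solvable b q M \<longleftrightarrow>
     (\<exists>i\<in>{1..q}. \<exists>j\<in>{1..q}. lim (\<lambda>n. dtv b q M n i j) > 0)"

end

theory Submission
  imports Defs
begin


lemma finite_verts: "finite (verts b n)"
proof -
  have "verts b n = {xs. set xs \<subseteq> {..<b} \<and> length xs \<le> n}" by (auto simp: verts_def)
  thus ?thesis using finite_lists_length_le[of "{..<b}" n] by simp
qed

lemma finite_level: "finite (level b n)"
  by (rule finite_subset[OF _ finite_verts[of b n]]) (auto simp: level_def verts_def)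

lemma nil_verts[simp]: "[] \<in> verts b n" by (simp add: verts_def)

lemma cons_verts[simp]: "(c # u \<in> verts b (Suc n)) \<longleftrightarrow> c < b \<and> u \<in> verts b n"
  by (auto simp: verts_def)
lemma cons_level[simp]: "(c # u \<in> level b (Suc n)) \<longleftrightarrow> c < b \<and> u \<in> level b n"
  by (auto simp: level_def)
lemma nil_level[simp]: "([] \<in> level b n) \<longleftrightarrow> n = 0" by (auto simp: level_def)
lemma level_sub_verts: "level b n \<subseteq> verts b n" by (auto simp: level_def verts_def)

lemma verts_Suc_nonnil: "w \<in> verts b (Suc n) \<Longrightarrow> w \<noteq> [] \<Longrightarrow> hd w < b \<and> tl w \<in> verts b n"
  by (cases w) auto

lemma finite_configs: "finite (configs b q n)"
  unfolding configs_def by (intro finite_PiE finite_level) auto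

definition sub :: "nat \<Rightarrow> nat \<Rightarrow> (nat list \<Rightarrow> nat) \<Rightarrow> nat \<Rightarrow> (nat list \<Rightarrow> nat)" where
  "sub b n \<tau> c = restrict (\<lambda>w. \<tau> (c # w)) (level b n)"

definition W :: "nat \<Rightarrow> tmatrix \<Rightarrow> nat \<Rightarrow> (nat list \<Rightarrow> nat) \<Rightarrow> real" where
  "W b M n \<sigma> = (\<Prod>w\<in>verts b n - {[]}. M (\<sigma> (butlast w)) (\<sigma> w))"

lemma verts_Suc_minus: "verts b (Suc n) - {[]} = (\<Union>c\<in>{..<b}. (Cons c) ` verts b n)"
proof (rule set_eqI, rule iffI)
  fix w assume "w \<in> verts b (Suc n) - {[]}"
  thus "w \<in> (\<Union>c\<in>{..<b}. (Cons c) ` verts b n)"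
    by (cases w) auto
qed auto

lemma W_Suc:
  fixes g :: "nat \<Rightarrow> nat list \<Rightarrow> nat"
  shows "W b M (Suc n) \<sigma> = (\<Prod>c<b. M (\<sigma> []) (\<sigma> [c]) * (\<Prod>u\<in>verts b n - {[]}. M (\<sigma> (c # butlast u)) (\<sigma> (c # u))))"
proof -
  have "W b M (Suc n) \<sigma> = (\<Prod>c<b. \<Prod>w\<in>(Cons c) ` verts b n. M (\<sigma> (butlast w)) (\<sigma> w))"
    unfolding W_def verts_Suc_minus
    by (rule prod.UNION_disjoint) (auto simp: finite_verts)
  also have "\<dots> = (\<Prod>c<b. \<Prod>u\<in>verts b n. M (\<sigma> (butlast (c#u))) (\<sigma> (c#u)))"
    by (rule prod.cong[OF refl]) (simp add: prod.reindex)
  also have "\<dots> = (\<Prod>c<b. M (\<sigma> []) (\<sigma> [c]) * (\<Prod>u\<in>verts b n - {[]}. M (\<sigma> (c # butlast u)) (\<sigma> (c # u))))"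
  proof (intro prod.cong refl)
    fix c
    have "(\<Prod>u\<in>verts b n. M (\<sigma> (butlast (c#u))) (\<sigma> (c#u))) =
       M (\<sigma> (butlast [c])) (\<sigma> [c]) * (\<Prod>u\<in>verts b n - {[]}. M (\<sigma> (butlast (c#u))) (\<sigma> (c#u)))"
      by (rule prod.remove) (auto simp: finite_verts)
    also have "\<dots> = M (\<sigma> []) (\<sigma> [c]) * (\<Prod>u\<in>verts b n - {[]}. M (\<sigma> (c # butlast u)) (\<sigma> (c # u)))"
      by (auto intro!: prod.cong)
    finally show "(\<Prod>u\<in>verts b n. M (\<sigma> (butlast (c#u))) (\<sigma> (c#u))) = \<dots>" .
  qed
  finally show ?thesis .
qed

lemma tree_law_W: "tree_law b q M n l \<tau> =
   (\<Sum>\<sigma>\<in>{\<sigma> \<in> verts b n \<rightarrow>\<^sub>E {1..q}. \<sigma> [] = l \<and> restrict \<sigma> (level b n) = \<tau>}. W b M n \<sigma>)"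
  unfolding tree_law_def W_def ..

lemma tree_law_Suc:
  assumes tau: "\<tau> \<in> configs b q (Suc n)" and l: "l \<in> {1..q}"
  shows "tree_law b q M (Suc n) l \<tau> =
     (\<Prod>c<b. \<Sum>k=1..q. M l k * tree_law b q M n k (sub b n \<tau> c))"
proof -
  define S where "S = {\<sigma> \<in> verts b (Suc n) \<rightarrow>\<^sub>E {1..q}. \<sigma> [] = l \<and> restrict \<sigma> (level b (Suc n)) = \<tau>}"
  define Gc where "Gc c = {\<sigma> \<in> verts b n \<rightarrow>\<^sub>E {1..q}. restrict \<sigma> (level b n) = sub b n \<tau> c}" for c
  define \<Phi> :: "(nat \<Rightarrow> nat list \<Rightarrow> nat) \<Rightarrow> nat list \<Rightarrow> nat" where
    "\<Phi> g = (\<lambda>w. if w \<in> verts b (Suc n) then (if w = [] then l else g (hd w) (tl w)) else undefined)" for g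
  define \<Psi> :: "(nat list \<Rightarrow> nat) \<Rightarrow> nat \<Rightarrow> nat list \<Rightarrow> nat" where
    "\<Psi> \<sigma> = (\<lambda>c\<in>{..<b}. \<lambda>w\<in>verts b n. \<sigma> (c # w))" for \<sigma>
  have tauE: "\<tau> \<in> extensional (level b (Suc n))" using tau by (auto simp: configs_def PiE_def)
  have fin: "finite (Gc c)" for c
    by (rule finite_subset[of _ "verts b n \<rightarrow>\<^sub>E {1..q}"]) (auto simp: Gc_def finite_verts intro!: finite_PiE)
  have a: "\<Phi> (\<Psi> \<sigma>) = \<sigma>" if "\<sigma> \<in> S" for \<sigma>
  proof
    fix w
    show "\<Phi> (\<Psi> \<sigma>) w = \<sigma> w"
    proof (cases "w \<in> verts b (Suc n)")
      case False thus ?thesis using that by (auto simp: \<Phi>_def S_def PiE_def extensional_def)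
    next
      case True
      thus ?thesis using that
        by (cases w) (auto simp: \<Phi>_def \<Psi>_def S_def)
    qed
  qed
  have b: "\<Psi> \<sigma> \<in> PiE {..<b} Gc" if "\<sigma> \<in> S" for \<sigma>
  proof -
    have "\<Psi> \<sigma> c \<in> Gc c" if c: "c < b" for c
    proof -
      have "(\<lambda>w\<in>verts b n. \<sigma> (c # w)) \<in> verts b n \<rightarrow>\<^sub>E {1..q}"
        using \<open>\<sigma> \<in> S\<close> c by (auto simp: S_def)
      moreover have "restrict (\<lambda>w\<in>verts b n. \<sigma> (c # w)) (level b n) = sub b n \<tau> c"
      proof
        fix w show "restrict (\<lambda>w\<in>verts b n. \<sigma> (c # w)) (level b n) w = sub b n \<tau> c w"
        proof (cases "w \<in> level b n")
          case True
          have "\<tau> (c # w) = restrict \<sigma> (level b (Suc n)) (c # w)" using \<open>\<sigma> \<in> S\<close> by (simp add: S_def)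
          also have "\<dots> = \<sigma> (c # w)" using True c by simp
          finally show ?thesis using True level_sub_verts by (auto simp: sub_def)
        qed (auto simp: sub_def)
      qed
      ultimately show ?thesis using c by (simp add: Gc_def \<Psi>_def)
    qed
    thus ?thesis by (auto simp: \<Psi>_def PiE_def)
  qed
  have c: "\<Psi> (\<Phi> g) = g" if "g \<in> PiE {..<b} Gc" for g
  proof
    fix c show "\<Psi> (\<Phi> g) c = g c"
    proof (cases "c < b")
      case False thus ?thesis using that by (auto simp: \<Psi>_def PiE_def extensional_def)
    next
      case True
      have "g c \<in> Gc c" using that True by auto
      hence gcE: "g c \<in> extensional (verts b n)" by (auto simp: Gc_def PiE_def)
      show ?thesis
      proof
        fix w show "\<Psi> (\<Phi> g) c w = g c w"
          using True gcE by (auto simp: \<Psi>_def \<Phi>_def extensional_def)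
      qed
    qed
  qed
  have d: "\<Phi> g \<in> S" if g: "g \<in> PiE {..<b} Gc" for g
  proof -
    have gc: "g c \<in> Gc c" if "c < b" for c using g that by auto
    have "\<Phi> g \<in> verts b (Suc n) \<rightarrow>\<^sub>E {1..q}"
    proof
      fix w assume w: "w \<in> verts b (Suc n)"
      show "\<Phi> g w \<in> {1..q}"
      proof (cases w)
        case Nil thus ?thesis using l by (simp add: \<Phi>_def)
      next
        case (Cons c u)
        hence "c < b" "u \<in> verts b n" using w by auto
        thus ?thesis using gc[of c] Cons by (auto simp: \<Phi>_def Gc_def)
      qed
    qed (auto simp: \<Phi>_def)
    moreover have "restrict (\<Phi> g) (level b (Suc n)) = \<tau>"
    proof
      fix w show "restrict (\<Phi> g) (level b (Suc n)) w = \<tau> w"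
      proof (cases "w \<in> level b (Suc n)")
        case False thus ?thesis using tauE by (auto simp: extensional_def)
      next
        case True
        then obtain c u where w: "w = c # u" by (cases w) auto
        hence cu: "c < b" "u \<in> level b n" using True by auto
        hence uv: "u \<in> verts b n" using level_sub_verts by auto
        have "restrict (g c) (level b n) u = sub b n \<tau> c u" using gc[OF cu(1)] by (simp add: Gc_def)
        thus ?thesis using w cu uv by (simp add: \<Phi>_def sub_def)
      qed
    qed
    ultimately show ?thesis by (simp add: S_def \<Phi>_def)
  qed
  have e: "W b M (Suc n) (\<Phi> g) = (\<Prod>c<b. M l (g c []) * W b M n (g c))" if g: "g \<in> PiE {..<b} Gc" for g
    unfolding W_Suc W_def[of b M n]
  proof (rule prod.cong[OF refl])
    fix c assume "c \<in> {..<b}"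
    hence c: "c < b" by simp
    have "(\<Prod>u\<in>verts b n - {[]}. M (\<Phi> g (c # butlast u)) (\<Phi> g (c # u))) =
          (\<Prod>u\<in>verts b n - {[]}. M (g c (butlast u)) (g c u))"
    proof (rule prod.cong[OF refl])
      fix u assume u: "u \<in> verts b n - {[]}"
      hence "butlast u \<in> verts b n" by (auto simp: verts_def dest: in_set_butlastD)
      thus "M (\<Phi> g (c # butlast u)) (\<Phi> g (c # u)) = M (g c (butlast u)) (g c u)"
        using u c by (simp add: \<Phi>_def)
    qed
    thus "M (\<Phi> g []) (\<Phi> g [c]) * (\<Prod>u\<in>verts b n - {[]}. M (\<Phi> g (c # butlast u)) (\<Phi> g (c # u))) =
         M l (g c []) * (\<Prod>u\<in>verts b n - {[]}. M (g c (butlast u)) (g c u))"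
      using c by (simp add: \<Phi>_def)
  qed
  have "tree_law b q M (Suc n) l \<tau> = (\<Sum>\<sigma>\<in>S. W b M (Suc n) \<sigma>)"
    by (simp add: tree_law_W S_def)
  also have "\<dots> = (\<Sum>g\<in>PiE {..<b} Gc. W b M (Suc n) (\<Phi> g))"
    by (rule sum.reindex_bij_witness[of _ \<Phi> \<Psi>]) (use a b c d in auto)
  also have "\<dots> = (\<Sum>g\<in>PiE {..<b} Gc. \<Prod>c<b. M l (g c []) * W b M n (g c))"
    using e by (rule sum.cong[OF refl])
  also have "\<dots> = (\<Prod>c<b. \<Sum>\<sigma>\<in>Gc c. M l (\<sigma> []) * W b M n \<sigma>)"
    by (rule prod_sum_PiE[symmetric]) (auto simp: fin)
  also have "\<dots> = (\<Prod>c<b. \<Sum>k=1..q. M l k * tree_law b q M n k (sub b n \<tau> c))"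
  proof (rule prod.cong[OF refl])
    fix c
    have "(\<Sum>\<sigma>\<in>Gc c. M l (\<sigma> []) * W b M n \<sigma>) =
          (\<Sum>k=1..q. \<Sum>\<sigma>\<in>{\<sigma>\<in>Gc c. \<sigma> [] = k}. M l (\<sigma> []) * W b M n \<sigma>)"
      by (rule sum.group[symmetric], rule fin, simp, auto simp: Gc_def)
    also have "\<dots> = (\<Sum>k=1..q. M l k * tree_law b q M n k (sub b n \<tau> c))"
    proof (rule sum.cong[OF refl])
      fix k
      have "{\<sigma>\<in>Gc c. \<sigma> [] = k} = {\<sigma> \<in> verts b n \<rightarrow>\<^sub>E {1..q}. \<sigma> [] = k \<and> restrict \<sigma> (level b n) = sub b n \<tau> c}"
        by (auto simp: Gc_def)
      thus "(\<Sum>\<sigma>\<in>{\<sigma>\<in>Gc c. \<sigma> [] = k}. M l (\<sigma> []) * W b M n \<sigma>) = M l k * tree_law b q M n k (sub b n \<tau> c)"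
        by (simp add: tree_law_W sum_distrib_left)
    qed
    finally show "(\<Sum>\<sigma>\<in>Gc c. M l (\<sigma> []) * W b M n \<sigma>) = \<dots>" .
  qed
  finally show ?thesis .
qed

lemma configs_reindex:
  "(\<Sum>\<tau>\<in>configs b q (Suc n). h (\<lambda>c\<in>{..<b}. sub b n \<tau> c)) = (\<Sum>g\<in>PiE {..<b} (\<lambda>_. configs b q n). h g)"
proof -
  define \<Phi> :: "(nat \<Rightarrow> nat list \<Rightarrow> nat) \<Rightarrow> nat list \<Rightarrow> nat" where
    "\<Phi> g = (\<lambda>w. if w \<in> level b (Suc n) then g (hd w) (tl w) else undefined)" for g
  define \<Psi> where "\<Psi> \<tau> = (\<lambda>c\<in>{..<b}. sub b n \<tau> c)" for \<tau>
  have a: "\<Phi> (\<Psi> \<tau>) = \<tau>" if "\<tau> \<in> configs b q (Suc n)" for \<tau>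
  proof
    fix w show "\<Phi> (\<Psi> \<tau>) w = \<tau> w"
    proof (cases "w \<in> level b (Suc n)")
      case False thus ?thesis using that by (auto simp: \<Phi>_def configs_def PiE_def extensional_def)
    next
      case True
      thus ?thesis by (cases w) (auto simp: \<Phi>_def \<Psi>_def sub_def)
    qed
  qed
  have b: "\<Psi> \<tau> \<in> PiE {..<b} (\<lambda>_. configs b q n)" if "\<tau> \<in> configs b q (Suc n)" for \<tau>
    using that by (auto simp: \<Psi>_def configs_def sub_def PiE_def Pi_def)
  have c: "\<Psi> (\<Phi> g) = g" if g: "g \<in> PiE {..<b} (\<lambda>_. configs b q n)" for g
  proof
    fix c show "\<Psi> (\<Phi> g) c = g c"
    proof (cases "c < b")
      case False thus ?thesis using that by (auto simp: \<Psi>_def PiE_def extensional_def)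
    next
      case True
      have "g c \<in> configs b q n" using that True by auto
      hence gcE: "g c \<in> extensional (level b n)" by (auto simp: configs_def PiE_def)
      show ?thesis
      proof
        fix w show "\<Psi> (\<Phi> g) c w = g c w"
          using True gcE by (auto simp: \<Psi>_def \<Phi>_def sub_def extensional_def)
      qed
    qed
  qed
  have d: "\<Phi> g \<in> configs b q (Suc n)" if g: "g \<in> PiE {..<b} (\<lambda>_. configs b q n)" for g
    unfolding configs_def
  proof
    fix w assume w: "w \<in> level b (Suc n)"
    then obtain c u where wc: "w = c # u" by (cases w) auto
    hence cu: "c < b" "u \<in> level b n" using w by auto
    have "g c \<in> level b n \<rightarrow>\<^sub>E {1..q}" using g cu by (auto simp: configs_def)
    hence "g c u \<in> {1..q}" using cu by auto
    thus "\<Phi> g w \<in> {1..q}" using w wc by (simp add: \<Phi>_def)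
  qed (auto simp: \<Phi>_def)
  show ?thesis
    by (rule sum.reindex_bij_witness[of _ \<Phi> \<Psi>]) (use a b c d in \<open>auto simp: \<Psi>_def\<close>)
qed

lemma tree_law_nonneg:
  assumes "\<forall>i\<in>{1..q}. \<forall>j\<in>{1..q}. 0 \<le> M i j"
  shows "0 \<le> tree_law b q M n l \<tau>"
  unfolding tree_law_def
proof (intro sum_nonneg prod_nonneg)
  fix \<sigma> w assume s: "\<sigma> \<in> {\<sigma> \<in> verts b n \<rightarrow>\<^sub>E {1..q}. \<sigma> [] = l \<and> restrict \<sigma> (level b n) = \<tau>}"
    and w: "w \<in> verts b n - {[]}"
  hence "butlast w \<in> verts b n" by (auto simp: verts_def dest: in_set_butlastD)
  thus "0 \<le> M (\<sigma> (butlast w)) (\<sigma> w)" using s w assms by auto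
qed

definition mix :: "nat \<Rightarrow> nat \<Rightarrow> tmatrix \<Rightarrow> nat \<Rightarrow> nat \<Rightarrow> (nat list \<Rightarrow> nat) \<Rightarrow> real" where
  "mix b q M n l \<eta> = (\<Sum>k=1..q. M l k * tree_law b q M n k \<eta>)"

lemma tree_law_Suc_mix:
  assumes "\<tau> \<in> configs b q (Suc n)" "l \<in> {1..q}"
  shows "tree_law b q M (Suc n) l \<tau> = (\<Prod>c<b. mix b q M n l ((\<lambda>c\<in>{..<b}. sub b n \<tau> c) c))"
  using tree_law_Suc[OF assms] by (simp add: mix_def)

lemma mix_nonneg:
  assumes "stochastic q M" "l \<in> {1..q}"
  shows "0 \<le> mix b q M n l \<eta>"
  using assms unfolding mix_def stochastic_def
  by (intro sum_nonneg mult_nonneg_nonneg tree_law_nonneg) auto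

lemma tree_law_sum:
  assumes st: "stochastic q M"
  shows "l \<in> {1..q} \<Longrightarrow> (\<Sum>\<tau>\<in>configs b q n. tree_law b q M n l \<tau>) = 1"
   and "l \<in> {1..q} \<Longrightarrow> (\<Sum>\<eta>\<in>configs b q n. mix b q M n l \<eta>) = 1"
proof -
  have main: "\<forall>l\<in>{1..q}. (\<Sum>\<tau>\<in>configs b q n. tree_law b q M n l \<tau>) = 1"
  proof (induction n)
    case 0
    show ?case
    proof
      fix l :: nat assume l: "l \<in> {1..q}"
      have lv0: "level b 0 = {[]}" "verts b 0 = {[]}" by (auto simp: level_def verts_def)
      have "tree_law b q M 0 l \<tau> = (if \<tau> = (\<lambda>w\<in>{[]}. l) then 1 else 0)" if "\<tau> \<in> configs b q 0" for \<tau>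
      proof -
        have "{\<sigma> \<in> verts b 0 \<rightarrow>\<^sub>E {1..q}. \<sigma> [] = l \<and> restrict \<sigma> (level b 0) = \<tau>} =
              (if \<tau> = (\<lambda>w\<in>{[]}. l) then {\<tau>} else {})"
          using l that by (auto simp: lv0 configs_def PiE_def extensional_def fun_eq_iff split: if_splits) metis
        thus ?thesis by (simp add: tree_law_def lv0)
      qed
      hence "(\<Sum>\<tau>\<in>configs b q 0. tree_law b q M 0 l \<tau>) =
             (\<Sum>\<tau>\<in>configs b q 0. if \<tau> = (\<lambda>w\<in>{[]}. l) then 1 else 0)" by (rule sum.cong[OF refl])
      also have "\<dots> = 1"
        using l by (subst sum.delta[OF finite_configs]) (auto simp: configs_def lv0)
      finally show "(\<Sum>\<tau>\<in>configs b q 0. tree_law b q M 0 l \<tau>) = 1" .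
    qed
  next
    case (Suc n)
    have msum: "(\<Sum>\<eta>\<in>configs b q n. mix b q M n l \<eta>) = 1" if l: "l \<in> {1..q}" for l
    proof -
      have "(\<Sum>\<eta>\<in>configs b q n. mix b q M n l \<eta>) = (\<Sum>k=1..q. M l k * (\<Sum>\<eta>\<in>configs b q n. tree_law b q M n k \<eta>))"
        unfolding mix_def by (simp add: sum.swap[of _ "configs b q n"] sum_distrib_left)
      also have "\<dots> = (\<Sum>k=1..q. M l k)" using Suc.IH by simp
      also have "\<dots> = 1" using st l by (simp add: stochastic_def)
      finally show ?thesis .
    qed
    show ?case
    proof
      fix l :: nat assume l: "l \<in> {1..q}"
      have "(\<Sum>\<tau>\<in>configs b q (Suc n). tree_law b q M (Suc n) l \<tau>) =
            (\<Sum>\<tau>\<in>configs b q (Suc n). (\<lambda>g. \<Prod>c<b. mix b q M n l (g c)) (\<lambda>c\<in>{..<b}. sub b n \<tau> c))"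
        using tree_law_Suc_mix l by (intro sum.cong refl) auto
      also have "\<dots> = (\<Sum>g\<in>PiE {..<b} (\<lambda>_. configs b q n). \<Prod>c<b. mix b q M n l (g c))"
        by (rule configs_reindex)
      also have "\<dots> = (\<Prod>c<b. \<Sum>\<eta>\<in>configs b q n. mix b q M n l \<eta>)"
        by (rule prod_sum_PiE[symmetric]) (auto simp: finite_configs)
      also have "\<dots> = 1" using msum[OF l] by simp
      finally show "(\<Sum>\<tau>\<in>configs b q (Suc n). tree_law b q M (Suc n) l \<tau>) = 1" .
    qed
  qed
  show "l \<in> {1..q} \<Longrightarrow> (\<Sum>\<tau>\<in>configs b q n. tree_law b q M n l \<tau>) = 1" using main by blast
  show "(\<Sum>\<eta>\<in>configs b q n. mix b q M n l \<eta>) = 1" if l: "l \<in> {1..q}"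
  proof -
    have "(\<Sum>\<eta>\<in>configs b q n. mix b q M n l \<eta>) = (\<Sum>k=1..q. M l k * (\<Sum>\<eta>\<in>configs b q n. tree_law b q M n k \<eta>))"
      unfolding mix_def by (simp add: sum.swap[of _ "configs b q n"] sum_distrib_left)
    also have "\<dots> = (\<Sum>k=1..q. M l k)" using main by simp
    also have "\<dots> = 1" using st l by (simp add: stochastic_def)
    finally show ?thesis .
  qed
qed

lemma abs_min_eq: "0 \<le> (x::real) \<Longrightarrow> 0 \<le> y \<Longrightarrow> \<bar>x - y\<bar> = x + y - 2 * min x y"
  by (auto simp: min_def abs_if)

lemma prod_tv:
  fixes \<mu> \<nu> :: "'c \<Rightarrow> 'a \<Rightarrow> real"
  assumes fC: "finite C" and fA: "finite A"
    and mu0: "\<And>c a. c \<in> C \<Longrightarrow> a \<in> A \<Longrightarrow> 0 \<le> \<mu> c a"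
    and nu0: "\<And>c a. c \<in> C \<Longrightarrow> a \<in> A \<Longrightarrow> 0 \<le> \<nu> c a"
    and mu1: "\<And>c. c \<in> C \<Longrightarrow> sum (\<mu> c) A = 1"
    and nu1: "\<And>c. c \<in> C \<Longrightarrow> sum (\<nu> c) A = 1"
  shows "1/2 * (\<Sum>g\<in>PiE C (\<lambda>_. A). \<bar>(\<Prod>c\<in>C. \<mu> c (g c)) - (\<Prod>c\<in>C. \<nu> c (g c))\<bar>)
     \<le> 1 - (\<Prod>c\<in>C. 1 - 1/2 * (\<Sum>a\<in>A. \<bar>\<mu> c a - \<nu> c a\<bar>))"
proof -
  let ?P = "PiE C (\<lambda>_. A)"
  have fP: "finite ?P" using fA fC by (intro finite_PiE) auto
  have e1: "1 - 1/2 * (\<Sum>a\<in>A. \<bar>\<mu> c a - \<nu> c a\<bar>) = (\<Sum>a\<in>A. min (\<mu> c a) (\<nu> c a))" if c: "c \<in> C" for c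
  proof -
    have "(\<Sum>a\<in>A. \<bar>\<mu> c a - \<nu> c a\<bar>) = (\<Sum>a\<in>A. \<mu> c a + \<nu> c a - 2 * min (\<mu> c a) (\<nu> c a))"
      using mu0 nu0 c by (intro sum.cong refl abs_min_eq) auto
    also have "\<dots> = 2 - 2 * (\<Sum>a\<in>A. min (\<mu> c a) (\<nu> c a))"
      using mu1[OF c] nu1[OF c] by (simp add: sum.distrib sum_subtractf sum_distrib_left)
    finally show ?thesis by linarith
  qed
  have s1: "(\<Sum>g\<in>?P. \<Prod>c\<in>C. \<mu> c (g c)) = 1"
    using prod_sum_PiE[OF fC, of "\<lambda>_. A" \<mu>] fA mu1 by simp
  have s2: "(\<Sum>g\<in>?P. \<Prod>c\<in>C. \<nu> c (g c)) = 1"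
    using prod_sum_PiE[OF fC, of "\<lambda>_. A" \<nu>] fA nu1 by simp
  have "(\<Sum>g\<in>?P. \<bar>(\<Prod>c\<in>C. \<mu> c (g c)) - (\<Prod>c\<in>C. \<nu> c (g c))\<bar>) =
        (\<Sum>g\<in>?P. (\<Prod>c\<in>C. \<mu> c (g c)) + (\<Prod>c\<in>C. \<nu> c (g c)) - 2 * min (\<Prod>c\<in>C. \<mu> c (g c)) (\<Prod>c\<in>C. \<nu> c (g c)))"
    using mu0 nu0 by (intro sum.cong refl abs_min_eq prod_nonneg) (auto simp: PiE_def Pi_def)
  also have "\<dots> = 2 - 2 * (\<Sum>g\<in>?P. min (\<Prod>c\<in>C. \<mu> c (g c)) (\<Prod>c\<in>C. \<nu> c (g c)))"
    using s1 s2 by (simp add: sum.distrib sum_subtractf sum_distrib_left)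
  finally have L: "1/2 * (\<Sum>g\<in>?P. \<bar>(\<Prod>c\<in>C. \<mu> c (g c)) - (\<Prod>c\<in>C. \<nu> c (g c))\<bar>) =
      1 - (\<Sum>g\<in>?P. min (\<Prod>c\<in>C. \<mu> c (g c)) (\<Prod>c\<in>C. \<nu> c (g c)))" by simp
  have "(\<Prod>c\<in>C. 1 - 1/2 * (\<Sum>a\<in>A. \<bar>\<mu> c a - \<nu> c a\<bar>)) = (\<Prod>c\<in>C. \<Sum>a\<in>A. min (\<mu> c a) (\<nu> c a))"
    using e1 by (rule prod.cong[OF refl])
  also have "\<dots> = (\<Sum>g\<in>?P. \<Prod>c\<in>C. min (\<mu> c (g c)) (\<nu> c (g c)))"
    using fA by (intro prod_sum_PiE fC) auto
  also have "\<dots> \<le> (\<Sum>g\<in>?P. min (\<Prod>c\<in>C. \<mu> c (g c)) (\<Prod>c\<in>C. \<nu> c (g c)))"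
  proof (rule sum_mono)
    fix g assume g: "g \<in> ?P"
    have gA: "\<And>c. c \<in> C \<Longrightarrow> g c \<in> A" using g by auto
    have "(\<Prod>c\<in>C. min (\<mu> c (g c)) (\<nu> c (g c))) \<le> (\<Prod>c\<in>C. \<mu> c (g c))"
      using gA mu0 nu0 by (intro prod_mono) auto
    moreover have "(\<Prod>c\<in>C. min (\<mu> c (g c)) (\<nu> c (g c))) \<le> (\<Prod>c\<in>C. \<nu> c (g c))"
      using gA mu0 nu0 by (intro prod_mono) auto
    ultimately show "(\<Prod>c\<in>C. min (\<mu> c (g c)) (\<nu> c (g c))) \<le> min (\<Prod>c\<in>C. \<mu> c (g c)) (\<Prod>c\<in>C. \<nu> c (g c))"
      by simp
  qed
  finally show ?thesis using L by linarith
qed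

lemma potts_alt: "potts_matrix q \<delta> i k = \<delta> + (if i = k then 1 - real q * \<delta> else 0)"
  by (simp add: potts_matrix_def algebra_simps)

lemma mix_potts:
  assumes "l \<in> {1..q}"
  shows "mix b q (potts_matrix q \<delta>) n l \<eta> =
    \<delta> * (\<Sum>k=1..q. tree_law b q (potts_matrix q \<delta>) n k \<eta>) + (1 - real q * \<delta>) * tree_law b q (potts_matrix q \<delta>) n l \<eta>"
  using assms unfolding mix_def potts_alt
  by (simp add: distrib_right sum.distrib sum_distrib_left if_distrib[where f="\<lambda>x. x * _"] sum.delta cong: if_cong)

lemma dtv_bounds:
  assumes st: "stochastic q M" and i: "i \<in> {1..q}" and j: "j \<in> {1..q}"
  shows "0 \<le> dtv b q M n i j" "dtv b q M n i j \<le> 1"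
proof -
  show "0 \<le> dtv b q M n i j" unfolding dtv_def by (auto intro: sum_nonneg)
  have nn: "0 \<le> tree_law b q M n l \<tau>" for l \<tau> using st by (intro tree_law_nonneg) (auto simp: stochastic_def)
  have "(\<Sum>\<tau>\<in>configs b q n. \<bar>tree_law b q M n i \<tau> - tree_law b q M n j \<tau>\<bar>) \<le>
        (\<Sum>\<tau>\<in>configs b q n. tree_law b q M n i \<tau> + tree_law b q M n j \<tau>)"
    using nn by (intro sum_mono) (simp add: abs_le_iff add_increasing add_increasing2)
  also have "\<dots> = 2" using tree_law_sum(1)[OF st i] tree_law_sum(1)[OF st j] by (simp add: sum.distrib)
  finally show "dtv b q M n i j \<le> 1" unfolding dtv_def by simp
qed

lemma dtv_step:
  assumes st: "stochastic q (potts_matrix q \<delta>)" and i: "i \<in> {1..q}" and j: "j \<in> {1..q}"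
  shows "dtv b q (potts_matrix q \<delta>) (Suc n) i j \<le> 1 - (1 - \<bar>1 - real q * \<delta>\<bar> * dtv b q (potts_matrix q \<delta>) n i j) ^ b"
proof -
  let ?M = "potts_matrix q \<delta>"
  let ?m = "mix b q ?M n"
  have "dtv b q ?M (Suc n) i j = 1/2 * (\<Sum>\<tau>\<in>configs b q (Suc n).
      (\<lambda>g. \<bar>(\<Prod>c<b. ?m i (g c)) - (\<Prod>c<b. ?m j (g c))\<bar>) (\<lambda>c\<in>{..<b}. sub b n \<tau> c))"
    unfolding dtv_def using tree_law_Suc_mix i j by (intro arg_cong[where f="\<lambda>x. 1/2 * x"] sum.cong refl) auto
  also have "\<dots> = 1/2 * (\<Sum>g\<in>PiE {..<b} (\<lambda>_. configs b q n). \<bar>(\<Prod>c<b. ?m i (g c)) - (\<Prod>c<b. ?m j (g c))\<bar>)"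
    by (subst configs_reindex) (rule refl)
  also have "\<dots> \<le> 1 - (\<Prod>c<b. 1 - 1/2 * (\<Sum>\<eta>\<in>configs b q n. \<bar>?m i \<eta> - ?m j \<eta>\<bar>))"
    by (rule prod_tv[where \<mu>="\<lambda>_. ?m i" and \<nu>="\<lambda>_. ?m j"])
       (auto simp: finite_configs mix_nonneg[OF st i] mix_nonneg[OF st j] tree_law_sum(2)[OF st i] tree_law_sum(2)[OF st j])
  also have "(\<Sum>\<eta>\<in>configs b q n. \<bar>?m i \<eta> - ?m j \<eta>\<bar>) =
      (\<Sum>\<eta>\<in>configs b q n. \<bar>1 - real q * \<delta>\<bar> * \<bar>tree_law b q ?M n i \<eta> - tree_law b q ?M n j \<eta>\<bar>)"
  proof (rule sum.cong[OF refl])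
    fix \<eta>
    have "?m i \<eta> - ?m j \<eta> = (1 - real q * \<delta>) * (tree_law b q ?M n i \<eta> - tree_law b q ?M n j \<eta>)"
      using mix_potts[OF i] mix_potts[OF j] by (simp add: algebra_simps)
    thus "\<bar>?m i \<eta> - ?m j \<eta>\<bar> = \<bar>1 - real q * \<delta>\<bar> * \<bar>tree_law b q ?M n i \<eta> - tree_law b q ?M n j \<eta>\<bar>"
      by (simp add: abs_mult)
  qed
  also have "1 - (\<Prod>c<b. 1 - 1/2 * (\<Sum>\<eta>\<in>configs b q n. \<bar>1 - real q * \<delta>\<bar> * \<bar>tree_law b q ?M n i \<eta> - tree_law b q ?M n j \<eta>\<bar>))
     = 1 - (1 - \<bar>1 - real q * \<delta>\<bar> * dtv b q ?M n i j) ^ b"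
    by (simp add: dtv_def sum_distrib_left[symmetric] mult.assoc mult.left_commute)
  finally show ?thesis .
qed

lemma strict_bern:
  fixes t :: real assumes "0 < t" "t \<le> 1" "2 \<le> b"
  shows "1 - real b * t < (1 - t) ^ b"
proof -
  obtain m where b: "b = Suc m" and m: "1 \<le> m" using assms(3) by (cases b) auto
  have "1 + real m * (- t) \<le> (1 + (-t)) ^ m" using assms by (intro Bernoulli_inequality) auto
  hence "(1 - t) * (1 - real m * t) \<le> (1 - t) * (1 - t) ^ m"
    using assms by (intro mult_left_mono) auto
  moreover have "1 - real b * t < (1 - t) * (1 - real m * t)"
    using assms m b by (simp add: algebra_simps)
  ultimately show ?thesis using b by simp
qed

lemma iter_props:
  fixes \<kappa> :: real and b :: nat
  assumes k0: "0 \<le> \<kappa>" and k1: "\<kappa> < 1" and b: "0 < b" and bk: "real b * \<kappa> \<le> 1"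
  defines "f \<equiv> (\<lambda>y. 1 - (1 - \<kappa> * y) ^ b)"
  shows "\<And>y. 0 \<le> y \<Longrightarrow> y \<le> 1 \<Longrightarrow> 0 \<le> f y \<and> f y \<le> y"
    and "\<And>y z. 0 \<le> y \<Longrightarrow> y \<le> z \<Longrightarrow> z \<le> 1 \<Longrightarrow> f y \<le> f z"
    and "\<And>y. 0 < y \<Longrightarrow> y \<le> 1 \<Longrightarrow> f y < y"
proof -
  fix y :: real assume y: "0 \<le> y" "y \<le> 1"
  have t: "0 \<le> \<kappa> * y" "\<kappa> * y \<le> 1" using y k0 k1 by (auto intro: mult_le_one)
  have "(1 - \<kappa> * y) ^ b \<le> 1" using t by (intro power_le_one) auto
  moreover have "1 + real b * (- (\<kappa> * y)) \<le> (1 + (- (\<kappa> * y))) ^ b" using t by (intro Bernoulli_inequality) auto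
  moreover have "real b * (\<kappa> * y) \<le> y" using bk y by (metis mult.assoc mult_left_le_one_le mult_nonneg_nonneg of_nat_0_le_iff k0 mult.commute)
  ultimately show "0 \<le> f y \<and> f y \<le> y" unfolding f_def by simp
next
  fix y z :: real assume yz: "0 \<le> y" "y \<le> z" "z \<le> 1"
  have "(1 - \<kappa> * z) ^ b \<le> (1 - \<kappa> * y) ^ b"
    using yz k0 k1 by (intro power_mono) (auto intro: mult_left_mono mult_le_one)
  thus "f y \<le> f z" unfolding f_def by simp
next
  fix y :: real assume y: "0 < y" "y \<le> 1"
  have t: "0 \<le> \<kappa> * y" "\<kappa> * y \<le> 1" using y k0 k1 by (auto intro: mult_le_one)
  have bky: "real b * (\<kappa> * y) \<le> y" using bk y by (metis mult.assoc mult_left_le_one_le mult_nonneg_nonneg of_nat_0_le_iff k0 mult.commute less_imp_le)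
  show "f y < y"
  proof (cases "b = 1")
    case True thus ?thesis using y k1 unfolding f_def by simp
  next
    case False
    hence b2: "2 \<le> b" using b by simp
    show ?thesis
    proof (cases "\<kappa> * y = 0")
      case True thus ?thesis using y b unfolding f_def by simp
    next
      case False
      have "0 < \<kappa> * y" using False t(1) by linarith
      hence "1 - real b * (\<kappa> * y) < (1 - \<kappa> * y) ^ b" using t b2 by (intro strict_bern) auto
      thus ?thesis using bky unfolding f_def by simp
    qed
  qed
qed

lemma iter_tendsto:
  fixes \<kappa> :: real and b :: nat
  assumes k0: "0 \<le> \<kappa>" and k1: "\<kappa> < 1" and b: "0 < b" and bk: "real b * \<kappa> \<le> 1"
  and x0: "x 0 = 1" and xS: "\<And>n. x (Suc n) = 1 - (1 - \<kappa> * x n) ^ b"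
  shows "x \<longlonglongrightarrow> 0" "\<And>n. 0 \<le> x n \<and> x n \<le> 1"
proof -
  note P = iter_props[OF k0 k1 b bk]
  show xb: "0 \<le> x n \<and> x n \<le> 1" for n
    by (induction n) (use P(1) in \<open>auto simp: x0 xS\<close>, smt (verit))
  have "decseq x" unfolding decseq_Suc_iff using P(1) xb xS by auto
  then obtain L where L: "x \<longlonglongrightarrow> L" "\<forall>i. L \<le> x i" using decseq_convergent[of x 0] xb by blast
  have L0: "0 \<le> L" using L(1) xb by (intro LIMSEQ_le_const) auto
  have L1: "L \<le> 1" using L(1) xb by (intro LIMSEQ_le_const2) auto
  have "(\<lambda>n. x (Suc n)) \<longlonglongrightarrow> 1 - (1 - \<kappa> * L) ^ b"
    unfolding xS by (intro tendsto_intros L(1))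
  moreover have "(\<lambda>n. x (Suc n)) \<longlonglongrightarrow> L" using L(1) by (rule LIMSEQ_Suc)
  ultimately have fL: "1 - (1 - \<kappa> * L) ^ b = L" using LIMSEQ_unique by blast
  have "L = 0"
  proof (rule ccontr)
    assume "L \<noteq> 0" hence "0 < L" using L0 by simp
    from P(3)[OF this L1] fL show False by simp
  qed
  thus "x \<longlonglongrightarrow> 0" using L(1) by simp
qed



lemma mpow_id:
  assumes "i \<in> {1..q}" "j \<in> {1..q}"
  shows "mpow q (potts_matrix q 0) k i j = (if i = j then 1 else 0)"
  using assms
proof (induction k arbitrary: j)
  case (Suc k)
  have "mpow q (potts_matrix q 0) (Suc k) i j = (\<Sum>l=1..q. (if i = l then 1 else 0) * potts_matrix q 0 l j)"
    using Suc by (simp add: Suc.IH)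
  also have "\<dots> = (\<Sum>l=1..q. if i = l then potts_matrix q 0 l j else 0)" by (rule sum.cong) auto
  also have "\<dots> = potts_matrix q 0 i j" using Suc.prems by (simp add: sum.delta)
  finally show ?case by (simp add: potts_matrix_def[of q 0 i j])
qed simp

lemma mpow_swap:
  assumes "i \<in> {1..2}" "j \<in> {1..2}"
  shows "mpow 2 (potts_matrix 2 1) k i j = (if (i = j) = even k then 1 else 0)"
  using assms
proof (induction k arbitrary: j)
  case (Suc k)
  have e: "{Suc 0..2::nat} = {Suc 0,2}" by auto
  have pm: "potts_matrix 2 1 a c = (if a = c then 0 else 1)" for a c by (simp add: potts_matrix_def)
  have "mpow 2 (potts_matrix 2 1) (Suc k) i j =
     mpow 2 (potts_matrix 2 1) k i 1 * potts_matrix 2 1 1 j + mpow 2 (potts_matrix 2 1) k i 2 * potts_matrix 2 1 2 j"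
    by (simp add: e)
  also have "\<dots> = (if (i = j) = even (Suc k) then 1 else 0)"
  proof -
    have i12: "i = 1 \<or> i = 2" and j12: "j = 1 \<or> j = 2" using Suc.prems by auto
    have I1: "mpow 2 (potts_matrix 2 1) k i 1 = (if (i = 1) = even k then 1 else 0)" by (rule Suc.IH) (use Suc.prems in auto)
    have I2: "mpow 2 (potts_matrix 2 1) k i 2 = (if (i = 2) = even k then 1 else 0)" by (rule Suc.IH) (use Suc.prems in auto)
    show ?thesis unfolding I1 I2 pm using i12 j12 by (elim disjE) simp_all
  qed
  finally show ?case .
qed simp

lemma kappa_lt1:
  assumes q: "q \<ge> 2" and erg: "ergodic q (potts_matrix q \<delta>)"
  shows "\<bar>1 - real q * \<delta>\<bar> < 1" "stochastic q (potts_matrix q \<delta>)"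
proof -
  show st: "stochastic q (potts_matrix q \<delta>)" using erg by (simp add: ergodic_def)
  obtain k where k: "k > 0" "\<forall>i\<in>{1..q}. \<forall>j\<in>{1..q}. 0 < mpow q (potts_matrix q \<delta>) k i j"
    using erg by (auto simp: ergodic_def)
  have nn: "\<forall>i\<in>{1..q}. \<forall>j\<in>{1..q}. 0 \<le> potts_matrix q \<delta> i j" using st by (simp add: stochastic_def)
  have "0 \<le> potts_matrix q \<delta> 1 2" using nn q by simp
  hence d0: "0 \<le> \<delta>" by (simp add: potts_matrix_def)
  have "0 \<le> potts_matrix q \<delta> 1 1" using nn q by simp
  hence d1: "0 \<le> 1 - (real q - 1) * \<delta>" by (simp add: potts_matrix_def)
  show "\<bar>1 - real q * \<delta>\<bar> < 1"
  proof (rule ccontr)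
    assume "\<not> ?thesis"
    hence "\<delta> = 0 \<or> (q = 2 \<and> \<delta> = 1)"
    proof -
      assume a: "\<not> \<bar>1 - real q * \<delta>\<bar> < 1"
      have "real q \<ge> 2" using q by simp
      show ?thesis
      proof (cases "1 - real q * \<delta> \<ge> 0")
        case True
        hence "real q * \<delta> \<le> 0" using a by simp
        hence "\<delta> = 0" using d0 q by (auto simp: mult_le_0_iff)
        thus ?thesis by simp
      next
        case False
        hence h: "real q * \<delta> \<ge> 2" using a by simp
        have e1: "(real q - 1) * \<delta> = real q * \<delta> - \<delta>" by (simp add: algebra_simps)
        have e2: "(real q - 2) * \<delta> = real q * \<delta> - 2 * \<delta>" by (simp add: algebra_simps)
        have "\<delta> \<ge> 1" using h d1 e1 by linarith
        have "real q - 2 \<le> (real q - 2) * \<delta>"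
          using mult_left_mono[OF \<open>\<delta> \<ge> 1\<close>, of "real q - 2"] \<open>real q \<ge> 2\<close> by simp
        hence "real q \<le> 2" using d1 e1 e2 \<open>\<delta> \<ge> 1\<close> by (smt (verit))
        hence q2: "q = 2" using q by simp
        hence "\<delta> \<le> 1" using d1 by simp
        thus ?thesis using q2 \<open>\<delta> \<ge> 1\<close> by simp
      qed
    qed
    thus False
    proof
      assume "\<delta> = 0"
      moreover have "0 < mpow q (potts_matrix q \<delta>) k 1 2" using k(2) q by simp
      ultimately show False using mpow_id[of 1 q 2 k] q by simp
    next
      assume h: "q = 2 \<and> \<delta> = 1"
      show False
      proof (cases "even k")
        case True
        have "0 < mpow q (potts_matrix q \<delta>) k 1 2" using k(2) q by simp
        with \<open>even k\<close> h show False using mpow_swap[of 1 2 k] by simp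
      next
        case False
        have "0 < mpow q (potts_matrix q \<delta>) k 1 1" using k(2) q by simp
        with \<open>odd k\<close> h show False using mpow_swap[of 1 1 k] by simp
      qed
    qed
  qed
qed


theorem mainTheorem4:
  fixes q b :: nat and \<delta> :: real
  assumes "q \<ge> 2"
    and "ergodic q (potts_matrix q \<delta>)"
    and "b > 0"
    and "real b * \<bar>1 - real q * \<delta>\<bar> \<le> 1"
  shows "\<not> reconstruction_solvable b q (potts_matrix q \<delta>)"
proof -
  define \<kappa> where "\<kappa> = \<bar>1 - real q * \<delta>\<bar>"
  have k1: "\<kappa> < 1" and st: "stochastic q (potts_matrix q \<delta>)"
    using kappa_lt1[OF assms(1,2)] by (auto simp: \<kappa>_def)
  have k0: "0 \<le> \<kappa>" by (simp add: \<kappa>_def)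
  have bk: "real b * \<kappa> \<le> 1" using assms(4) by (simp add: \<kappa>_def)
  define x where "x = rec_nat 1 (\<lambda>_ y. 1 - (1 - \<kappa> * y) ^ b)"
  have x0: "x 0 = 1" and xS: "\<And>n. x (Suc n) = 1 - (1 - \<kappa> * x n) ^ b" by (simp_all add: x_def)
  note T = iter_tendsto[OF k0 k1 assms(3) bk, of x, OF x0 xS]
  note P = iter_props[OF k0 k1 assms(3) bk]
  have le: "dtv b q (potts_matrix q \<delta>) n i j \<le> x n" if i: "i \<in> {1..q}" and j: "j \<in> {1..q}" for i j n
  proof (induction n)
    case 0 thus ?case using dtv_bounds[OF st i j] x0 by simp
  next
    case (Suc n)
    have "dtv b q (potts_matrix q \<delta>) (Suc n) i j \<le> 1 - (1 - \<kappa> * dtv b q (potts_matrix q \<delta>) n i j) ^ b"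
      using dtv_step[OF st i j] by (simp add: \<kappa>_def)
    also have "\<dots> \<le> 1 - (1 - \<kappa> * x n) ^ b"
      using P(2)[of "dtv b q (potts_matrix q \<delta>) n i j" "x n"] dtv_bounds[OF st i j] Suc.IH T(2)[of n] by simp
    finally show ?case using xS by simp
  qed
  show ?thesis unfolding reconstruction_solvable_def
  proof (intro notI)
    assume "\<exists>i\<in>{1..q}. \<exists>j\<in>{1..q}. 0 < lim (\<lambda>n. dtv b q (potts_matrix q \<delta>) n i j)"
    then obtain i j where i: "i \<in> {1..q}" and j: "j \<in> {1..q}"
      and pos: "0 < lim (\<lambda>n. dtv b q (potts_matrix q \<delta>) n i j)" by blast
    have "(\<lambda>n. dtv b q (potts_matrix q \<delta>) n i j) \<longlonglongrightarrow> 0"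
      by (rule real_tendsto_sandwich[where f="\<lambda>_. 0" and h=x]) (use dtv_bounds[OF st i j] le[OF i j] T(1) in auto)
    hence "lim (\<lambda>n. dtv b q (potts_matrix q \<delta>) n i j) = 0" by (rule limI)
    thus False using pos by simp
  qed
qed

end
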